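(* Let $G=(V,E)$ be a finite simple undirected graph with zipper constraint collection $\mathcal{Z}$, let $D\subseteq Z^2$, and let $\mathbb{S}$ be a downstream-enabled prescription on $D$. Suppose $\mathcal{K}^+$ is a minimum-cardinality clique cover of the augmented graph $G^+(\mathbb{S})$. Then there is a clique cover $\mathcal{K}$ of $G$ with the following properties: (i) $\mathcal{K}$ is faithful to $\mathbb{S}$; (ii) $\mathcal{K}$ satisfies every zipper constraint $(U,W,y)\in\mathcal{Z}$ with $U,W\in D$; (iii) $|\mathcal{K}|=|\mathcal{K}^+|$; and (iv) there is no clique cover $\mathcal{K}_h$ of $G$ that is faithful to $\mathbb{S}$ and has $|\mathcal{K}_h|<|\mathcal{K}|$.
   Context: A clique cover of a graph is a collection of cliques whose union is the vertex set. A zipper constraint collection is a finite set $\mathcal{Z}=\{(U_1,W_1,y_1),\dots,(U_m,W_m,y_m)\}$, where each $U_i,W_i\in E$ is an edge of $G$ and each $y_i$ is a label. A clique cover $\mathcal{K}$ satisfies $(U,W,y)$ if either no clique of $\mathcal{K}$ contains $U$, or some clique of $\mathcal{K}$ contains $W$. Let $Z^2=\{U_1,\dots,U_m,W_1,\dots,W_m\}$. Write $P\uparrow Q$ if $(P,Q,y)\in\mathcal{Z}$ for some $y$, and let $\rightsquigarrow$ be the transitive closure of $\uparrow$ on $Z^2$. A prescription on $D\subseteq Z^2$ is a subset $\mathbb{S}\subseteq D$. It is downstream enabled if, whenever $P_a\in\mathbb{S}$ and $P_a\rightsquigarrow P_b$, we have $P_b\in\mathbb{S}$ or $P_b\notin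 D$. A clique cover $\mathcal{K}$ of $G$ is faithful to $\mathbb{S}$ if every $P\in\mathbb{S}$ lies in some clique of $\mathcal{K}$ and no $P\in D\setminus\mathbb{S}$ lies in any clique of $\mathcal{K}$. Let $G'=(V,E\setminus(D\setminus\mathbb{S}))$. The augmented graph $G^+(\mathbb{S})$ has vertex set $\{[u]:u\in V\}\cup\{[u,w]:\{u,w\}\in\mathbb{S}\}$, where each $[A]$ is a new formal vertex labeled by the set $A$. Two distinct vertices $[A],[B]$ are adjacent if and only if $A\cup B$ is a clique in $G'$. *)

theory Defs
  imports Main
begin

definition simple_graph :: "'a set \<Rightarrow> 'a set set \<Rightarrow> bool" where
  "simple_graph V E \<longleftrightarrow> finite V \<and> (\<forall>e\<in>E. \<exists>u w. e = {u, w} \<and> u \<noteq> w \<and> u \<in> V \<and> w \<in> V)"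

definition is_clique :: "'a set \<Rightarrow> 'a set set \<Rightarrow> 'a set \<Rightarrow> bool" where
  "is_clique V E C \<longleftrightarrow> C \<subseteq> V \<and> (\<forall>u\<in>C. \<forall>w\<in>C. u \<noteq> w \<longrightarrow> {u, w} \<in> E)"

definition is_clique_cover :: "'a set \<Rightarrow> 'a set set \<Rightarrow> 'a set set \<Rightarrow> bool" where
  "is_clique_cover V E K \<longleftrightarrow> (\<forall>C\<in>K. is_clique V E C) \<and> \<Union>K = V"

definition zipper_collection :: "'a set set \<Rightarrow> ('a set \<times> 'a set \<times> 'l) set \<Rightarrow> bool" where
  "zipper_collection E Z \<longleftrightarrow> finite Z \<and> (\<forall>(U, W, y)\<in>Z. U \<in> E \<and> W \<in> E)"

definition satisfies_zipper :: "'a set set \<Rightarrow> ('a set \<times> 'a set \<times> 'l) \<Rightarrow> bool" where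
  "satisfies_zipper K z \<longleftrightarrow> (case z of (U, W, y) \<Rightarrow>
     (\<not> (\<exists>C\<in>K. U \<subseteq> C)) \<or> (\<exists>C\<in>K. W \<subseteq> C))"

definition Z2 :: "('a set \<times> 'a set \<times> 'l) set \<Rightarrow> 'a set set" where
  "Z2 Z = {U. \<exists>W y. (U, W, y) \<in> Z} \<union> {W. \<exists>U y. (U, W, y) \<in> Z}"

definition up_rel :: "('a set \<times> 'a set \<times> 'l) set \<Rightarrow> ('a set \<times> 'a set) set" where
  "up_rel Z = {(P, Q). \<exists>y. (P, Q, y) \<in> Z}"

definition downstream :: "('a set \<times> 'a set \<times> 'l) set \<Rightarrow> ('a set \<times> 'a set) set" where
  "downstream Z = (up_rel Z)\<^sup>+"

definition downstream_enabled ::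
  "('a set \<times> 'a set \<times> 'l) set \<Rightarrow> 'a set set \<Rightarrow> 'a set set \<Rightarrow> bool" where
  "downstream_enabled Z D S \<longleftrightarrow> S \<subseteq> D \<and>
     (\<forall>Pa Pb. Pa \<in> S \<and> (Pa, Pb) \<in> downstream Z \<longrightarrow> Pb \<in> S \<or> Pb \<notin> D)"

definition faithful :: "'a set set \<Rightarrow> 'a set set \<Rightarrow> 'a set set \<Rightarrow> bool" where
  "faithful D S K \<longleftrightarrow> (\<forall>P\<in>S. \<exists>C\<in>K. P \<subseteq> C) \<and> (\<forall>P\<in>D - S. \<forall>C\<in>K. \<not> P \<subseteq> C)"

text \<open>Augmented graph: formal vertex [A] is represented by the set A itself
  ([u] as {u}, [u,w] as {u,w}); these are distinct since edges have two elements.\<close>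
definition aug_vertices :: "'a set \<Rightarrow> 'a set set \<Rightarrow> 'a set set" where
  "aug_vertices V S = {{u} | u. u \<in> V} \<union> S"

definition aug_edges :: "'a set \<Rightarrow> 'a set set \<Rightarrow> 'a set set \<Rightarrow> 'a set set \<Rightarrow> 'a set set set" where
  "aug_edges V E D S = {{A, B} | A B. A \<in> aug_vertices V S \<and> B \<in> aug_vertices V S \<and> A \<noteq> B
      \<and> is_clique V (E - (D - S)) (A \<union> B)}"

end

theory Submission
  imports Defs
begin

lemma clique_mono: "is_clique V E C \<Longrightarrow> B \<subseteq> C \<Longrightarrow> is_clique V E B"
  unfolding is_clique_def by blast

lemma aug_vert_clique:
  assumes "simple_graph V E" "S \<subseteq> D" "D \<subseteq> E" "A \<in> aug_vertices V S"
  shows "is_clique V (E - (D - S)) A"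
proof -
  from assms(4) consider u where "A = {u}" "u \<in> V" | "A \<in> S"
    unfolding aug_vertices_def by blast
  then show ?thesis
  proof cases
    case 1 then show ?thesis unfolding is_clique_def by auto
  next
    case 2
    then have "A \<in> E" using assms by blast
    then obtain u w where "A = {u,w}" "u \<noteq> w" "u \<in> V" "w \<in> V"
      using assms(1) unfolding simple_graph_def by blast
    have "{w,u} = A" using \<open>A = {u,w}\<close> by blast
    then show ?thesis using 2 \<open>A \<in> E\<close> \<open>A = {u,w}\<close> \<open>u \<in> V\<close> \<open>w \<in> V\<close>
      unfolding is_clique_def by auto
  qed
qed

lemma union_clique:
  assumes "simple_graph V E" "S \<subseteq> D" "D \<subseteq> E"
    and "is_clique (aug_vertices V S) (aug_edges V E D S) C"
  shows "is_clique V (E - (D - S)) (\<Union>C)"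
  unfolding is_clique_def
proof (intro conjI ballI impI)
  have CA: "C \<subseteq> aug_vertices V S" using assms(4) unfolding is_clique_def by blast
  show "\<Union>C \<subseteq> V"
  proof
    fix x assume "x \<in> \<Union>C"
    then obtain A where "A \<in> C" "x \<in> A" by blast
    then have "is_clique V (E - (D - S)) A" using CA aug_vert_clique[OF assms(1-3)] by blast
    then show "x \<in> V" using \<open>x \<in> A\<close> unfolding is_clique_def by blast
  qed
  fix u w assume u: "u \<in> \<Union>C" and w: "w \<in> \<Union>C" and uw: "u \<noteq> w"
  then obtain A B where AB: "A \<in> C" "B \<in> C" "u \<in> A" "w \<in> B" by blast
  show "{u, w} \<in> E - (D - S)"
  proof (cases "A = B")
    case True
    have "A \<in> aug_vertices V S" using CA AB(1) by (rule subsetD)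
    then have cA: "is_clique V (E - (D - S)) A" by (rule aug_vert_clique[OF assms(1-3)])
    then have H: "\<forall>x\<in>A. \<forall>y\<in>A. x \<noteq> y \<longrightarrow> {x,y} \<in> E - (D - S)" unfolding is_clique_def by (rule conjunct2)
    have "w \<in> A" using AB(4) True by simp
    then show ?thesis using H[rule_format, OF AB(3) _ uw] by simp
  next
    case False
    have "\<forall>x\<in>C. \<forall>y\<in>C. x \<noteq> y \<longrightarrow> {x,y} \<in> aug_edges V E D S"
      using assms(4) unfolding is_clique_def by (rule conjunct2)
    then have "{A,B} \<in> aug_edges V E D S" using AB False by blast
    then obtain A' B' where eq: "{A,B} = {A',B'}" and cl: "is_clique V (E - (D - S)) (A' \<union> B')"
      unfolding aug_edges_def by auto
    have "A \<union> B = A' \<union> B'" using eq by (auto simp: doubleton_eq_iff)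
    then have "is_clique V (E - (D - S)) (A \<union> B)" using cl by simp
    then have H: "\<forall>x\<in>A \<union> B. \<forall>y\<in>A \<union> B. x \<noteq> y \<longrightarrow> {x,y} \<in> E - (D - S)" unfolding is_clique_def by (rule conjunct2)
    have "u \<in> A \<union> B" "w \<in> A \<union> B" using AB(3,4) by simp_all
    then show ?thesis using H[rule_format, OF _ _ uw] by simp
  qed
qed

lemma clique_of_union:
  assumes "X \<subseteq> aug_vertices V S" "is_clique V (E - (D - S)) (\<Union>X)"
  shows "is_clique (aug_vertices V S) (aug_edges V E D S) X"
  unfolding is_clique_def
proof (intro conjI ballI impI)
  show "X \<subseteq> aug_vertices V S" by fact
  fix A B assume AB: "A \<in> X" "B \<in> X" "A \<noteq> B"
  have "A \<union> B \<subseteq> \<Union>X" using AB(1,2) by (simp add: Sup_upper le_supI)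
  then have c: "is_clique V (E - (D - S)) (A \<union> B)" by (rule clique_mono[OF assms(2)])
  have "A \<in> aug_vertices V S" "B \<in> aug_vertices V S" using AB(1,2) assms(1) by auto
  then show "{A, B} \<in> aug_edges V E D S"
    unfolding aug_edges_def using AB(3) c by (intro CollectI exI conjI[OF refl]) auto
qed

lemma finite_Z2: "finite Z \<Longrightarrow> finite (Z2 Z)"
proof -
  assume f: "finite Z"
  have "Z2 Z = fst ` Z \<union> (fst \<circ> snd) ` Z" unfolding Z2_def by (auto simp: image_iff; force)
  then show ?thesis using f by simp
qed

theorem lemma5:
  fixes V :: "'a set" and E :: "'a set set" and Z :: "('a set \<times> 'a set \<times> 'l) set"
    and D S :: "'a set set" and Kplus :: "'a set set set"
  assumes "simple_graph V E"
    and "zipper_collection E Z"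
    and "D \<subseteq> Z2 Z"
    and "S \<subseteq> D"
    and "downstream_enabled Z D S"
    and "is_clique_cover (aug_vertices V S) (aug_edges V E D S) Kplus"
    and "\<forall>K'. is_clique_cover (aug_vertices V S) (aug_edges V E D S) K' \<longrightarrow> card Kplus \<le> card K'"
  shows "\<exists>K. is_clique_cover V E K
    \<and> faithful D S K
    \<and> (\<forall>(U, W, y)\<in>Z. U \<in> D \<and> W \<in> D \<longrightarrow> satisfies_zipper K (U, W, y))
    \<and> card K = card Kplus
    \<and> \<not> (\<exists>Kh. is_clique_cover V E Kh \<and> faithful D S Kh \<and> card Kh < card K)"
proof -
  let ?AV = "aug_vertices V S" and ?AE = "aug_edges V E D S"
  have Z2E: "Z2 Z \<subseteq> E" using assms(2) unfolding zipper_collection_def Z2_def by blast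
  have DE: "D \<subseteq> E" using Z2E assms(3) by blast
  have finV: "finite V" using assms(1) unfolding simple_graph_def by blast
  have finD: "finite D" using finite_Z2 assms(2,3) unfolding zipper_collection_def
    by (meson finite_subset)
  have finAV: "finite ?AV" unfolding aug_vertices_def using finV finD assms(4)
    by (simp add: finite_subset)
  have KpA: "\<And>C. C \<in> Kplus \<Longrightarrow> C \<subseteq> ?AV" using assms(6)
    unfolding is_clique_cover_def is_clique_def by blast
  have finKp: "finite Kplus"
    using finAV KpA by (meson Pow_iff finite_Pow_iff finite_subset subsetI)
  have cl: "\<And>C. C \<in> Kplus \<Longrightarrow> is_clique V (E - (D - S)) (\<Union>C)"
    using union_clique[OF assms(1,4) DE] assms(6) unfolding is_clique_cover_def by blast
  have inj: "inj_on Union Kplus"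
  proof (rule inj_onI, rule ccontr)
    fix C1 C2 assume c: "C1 \<in> Kplus" "C2 \<in> Kplus" "\<Union>C1 = \<Union>C2" "C1 \<noteq> C2"
    define K' where "K' = insert (C1 \<union> C2) (Kplus - {C1, C2})"
    have "is_clique ?AV ?AE (C1 \<union> C2)"
      by (rule clique_of_union) (use c KpA cl in auto)
    then have "is_clique_cover ?AV ?AE K'"
      using assms(6) c unfolding K'_def is_clique_cover_def by auto
    moreover have "card K' < card Kplus"
    proof -
      have "card K' \<le> Suc (card (Kplus - {C1, C2}))"
        unfolding K'_def by (simp add: card_insert_le_m1)
      also have "card (Kplus - {C1, C2}) = card Kplus - 2"
        using c finKp by (simp add: card_Diff_subset)
      finally have le: "card K' \<le> Suc (card Kplus - 2)" .
      have "card {C1, C2} = 2" using c(4) by simp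
      moreover have "card {C1, C2} \<le> card Kplus" using c(1,2) finKp by (intro card_mono) auto
      ultimately show ?thesis using le by linarith
    qed
    moreover have "card Kplus \<le> card K'" using assms(7) calculation(1) by blast
    ultimately show False by linarith
  qed
  define K where "K = Union ` Kplus"
  have cover: "is_clique_cover V E K"
    unfolding is_clique_cover_def
  proof
    show "\<forall>C\<in>K. is_clique V E C" using cl unfolding K_def is_clique_def by blast
    have "\<Union>K = \<Union>(\<Union>Kplus)" unfolding K_def by blast
    also have "\<dots> = \<Union>?AV" using assms(6) unfolding is_clique_cover_def by simp
    also have "\<dots> = V"
      using aug_vert_clique[OF assms(1,4) DE] unfolding is_clique_def aug_vertices_def by blast
    finally show "\<Union>K = V" .
  qed
  have faith: "faithful D S K"
    unfolding faithful_def
  proof (intro conjI ballI)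
    fix P assume "P \<in> S"
    then have "P \<in> ?AV" unfolding aug_vertices_def by blast
    then obtain C where "C \<in> Kplus" "P \<in> C" using assms(6) unfolding is_clique_cover_def by blast
    then show "\<exists>C\<in>K. P \<subseteq> C" unfolding K_def by blast
  next
    fix P C assume P: "P \<in> D - S" and C: "C \<in> K"
    then have "P \<in> E" using DE by blast
    then obtain u w where uw: "P = {u,w}" "u \<noteq> w"
      using assms(1) unfolding simple_graph_def by blast
    have "is_clique V (E - (D - S)) C" using C cl unfolding K_def by blast
    then show "\<not> P \<subseteq> C" using P uw unfolding is_clique_def by blast
  qed
  have zip: "\<forall>(U, W, y)\<in>Z. U \<in> D \<and> W \<in> D \<longrightarrow> satisfies_zipper K (U, W, y)"
  proof (intro ballI, clarify)
    fix U W y assume z: "(U, W, y) \<in> Z" "U \<in> D" "W \<in> D"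
    show "satisfies_zipper K (U, W, y)"
    proof (cases "\<exists>C\<in>K. U \<subseteq> C")
      case True
      then have "U \<in> S" using faith z unfolding faithful_def by blast
      moreover have "(U, W) \<in> downstream Z"
        using z unfolding downstream_def up_rel_def by blast
      ultimately have "W \<in> S" using assms(5) z unfolding downstream_enabled_def by blast
      then show ?thesis using faith unfolding faithful_def satisfies_zipper_def by auto
    next
      case False then show ?thesis unfolding satisfies_zipper_def by auto
    qed
  qed
  have cardK: "card K = card Kplus" unfolding K_def using inj by (simp add: card_image)
  have minimal: "\<not> (\<exists>Kh. is_clique_cover V E Kh \<and> faithful D S Kh \<and> card Kh < card K)"
  proof
    assume "\<exists>Kh. is_clique_cover V E Kh \<and> faithful D S Kh \<and> card Kh < card K"
    then obtain Kh where Kh: "is_clique_cover V E Kh" "faithful D S Kh" "card Kh < card K"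
      by blast
    have finKh: "finite Kh" using Kh(1) finV unfolding is_clique_cover_def
      by (meson Pow_iff Sup_le_iff finite_Pow_iff finite_subset subsetI)
    define f where "f = (\<lambda>Q. {{u} | u. u \<in> Q} \<union> {P \<in> S. P \<subseteq> Q})"
    define Kp' where "Kp' = f ` Kh"
    have QV: "\<And>Q. Q \<in> Kh \<Longrightarrow> Q \<subseteq> V" using Kh(1) unfolding is_clique_cover_def by blast
    have "is_clique_cover ?AV ?AE Kp'"
      unfolding is_clique_cover_def
    proof
      show "\<forall>C\<in>Kp'. is_clique ?AV ?AE C"
      proof
        fix C assume "C \<in> Kp'"
        then obtain Q where Q: "Q \<in> Kh" "C = f Q" unfolding Kp'_def by blast
        have sub: "f Q \<subseteq> ?AV" using QV[OF Q(1)] unfolding f_def aug_vertices_def by blast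
        have un: "\<Union>(f Q) = Q" unfolding f_def by auto
        have "is_clique V (E - (D - S)) Q"
          unfolding is_clique_def
        proof (intro conjI ballI impI)
          show "Q \<subseteq> V" using QV[OF Q(1)] .
          fix u w assume uQ: "u \<in> Q" and wQ: "w \<in> Q" and uw: "u \<noteq> w"
          have "is_clique V E Q" using Kh(1) Q(1) unfolding is_clique_cover_def by blast
          then have H: "\<forall>x\<in>Q. \<forall>y\<in>Q. x \<noteq> y \<longrightarrow> {x,y} \<in> E" unfolding is_clique_def by (rule conjunct2)
          have "{u,w} \<in> E" using H[rule_format, OF uQ wQ uw] .
          moreover have H2: "\<forall>P\<in>D - S. \<forall>C\<in>Kh. \<not> P \<subseteq> C" using Kh(2) unfolding faithful_def by (rule conjunct2)
          have "{u,w} \<subseteq> Q" using uQ wQ by simp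
          then have "{u,w} \<notin> D - S" using H2 Q(1) by blast
          ultimately show "{u,w} \<in> E - (D - S)" by blast
        qed
        then have "is_clique ?AV ?AE (f Q)" using clique_of_union[OF sub] un by simp
        then show "is_clique ?AV ?AE C" using Q(2) by simp
      qed
      show "\<Union>Kp' = ?AV"
      proof
        show "\<Union>Kp' \<subseteq> ?AV"
        proof
          fix A assume "A \<in> \<Union>Kp'"
          then obtain Q where Q: "Q \<in> Kh" "A \<in> f Q" unfolding Kp'_def by blast
          show "A \<in> ?AV" using Q(2) QV[OF Q(1)] unfolding f_def aug_vertices_def by blast
        qed
        show "?AV \<subseteq> \<Union>Kp'"
        proof
          fix A assume "A \<in> ?AV"
          then consider u where "A = {u}" "u \<in> V" | "A \<in> S" unfolding aug_vertices_def by blast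
          then show "A \<in> \<Union>Kp'"
          proof cases
            case 1
            then obtain Q where "Q \<in> Kh" "u \<in> Q" using Kh(1) unfolding is_clique_cover_def by blast
            then show ?thesis using 1 unfolding Kp'_def f_def by blast
          next
            case 2
            then obtain Q where "Q \<in> Kh" "A \<subseteq> Q" using Kh(2) unfolding faithful_def by blast
            then show ?thesis using 2 unfolding Kp'_def f_def by blast
          qed
        qed
      qed
    qed
    moreover have "card Kp' < card Kplus"
      using card_image_le[OF finKh, of f] Kh(3) cardK unfolding Kp'_def by linarith
    moreover have "card Kplus \<le> card Kp'" using assms(7) calculation(1) by blast
    ultimately show False by linarith
  qed
  show ?thesis using cover faith zip cardK minimal by blast
qed

end
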